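(* Let $d,N,m$ be positive integers with $m\ge d$ and $N\ge d$. Let $X\in\mathbb{R}^{d\times m}$ be a data matrix with $XX^T=I_d$ (whitened data). Consider the two-layer linear network $f(x)=W_2W_1x$ with $W_1\in\mathbb{R}^{N\times d}$, $W_2\in\mathbb{R}^{1\times N}$, whose initial weights satisfy $\|W_1^{(0)}\|_F=\|W_2^{(0)}\|_F=\sigma$ with $0<\sigma\ll 1$. Targets are $Y=\beta^TX$ with $\beta\in\mathbb{R}^d$ having i.i.d. entries $\beta_i\sim\mathcal{N}(0,1/d)$; write $\hat\beta=\beta/\|\beta\|$. Define the initial NTK $K^{(0)}=X^T\big(W_1^{(0)T}W_1^{(0)}+\|W_2^{(0)}\|^2 I_d\big)X$ and the final NTK (after training by gradient flow on the mean squared error) $K^{(f)}=\|\beta\|\,X^T(\hat\beta\hat\beta^T+I_d)X+O(\sigma^2)$. Then, neglecting additive $O(\sigma^2)$ terms, the expected kernel alignment $\mathbb{E}_\beta\big[\mathrm{KA}(K^{(f)},K^{(0)})\big]$, viewed as a function of $W_1^{(0)}$ over all $W_1^{(0)}$ with $\|W_1^{(0)}\|_F=\sigma$, is maximized by high-rank isotropic initializations, i.e. by $W_1^{(0)}$ whose $d$ singular values $s_1,\dots,s_d$ all have equal absolute value ($s_j^2=\sigma^2/d$ for all $j$).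
   Context: The kernel alignment of two $m\times m$ matrices is $\mathrm{KA}(K^{(f)},K^{(0)})=\dfrac{\operatorname{Tr}(K^{(f)}K^{(0)})}{\|K^{(f)}\|_F\,\|K^{(0)}\|_F}$. The expectation is over the random task vector $\beta$. The expression for $K^{(f)}$ is the asymptotic (infinite-training-time) neural tangent kernel of this network in the small-initialization regime, and is taken as given. *)

theory Defs
  imports "HOL-Analysis.Analysis" "HOL-Probability.Probability"
begin

definition frob_norm :: "real^'c^'r \<Rightarrow> real" where
  "frob_norm A = sqrt (\<Sum>i\<in>UNIV. \<Sum>j\<in>UNIV. (A$i$j)\<^sup>2)"

definition kernel_alignment :: "real^'m^'m \<Rightarrow> real^'m^'m \<Rightarrow> real" where
  "kernel_alignment K1 K0 = trace (K1 ** K0) / (frob_norm K1 * frob_norm K0)"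

definition outer :: "real^'d \<Rightarrow> real^'d \<Rightarrow> real^'d^'d" where
  "outer u v = (\<chi> i j. u$i * v$j)"

definition ntk_init :: "real^'m^'d \<Rightarrow> real^'d^'n \<Rightarrow> real^'n \<Rightarrow> real^'m^'m" where
  "ntk_init X W1 W2 = transpose X ** (transpose W1 ** W1 + ((norm W2)\<^sup>2) *\<^sub>R mat 1) ** X"

text \<open>Final NTK, leading order (the O(sigma^2) term neglected):
  K_f = |beta| X^T (bhat bhat^T + I) X, with bhat = beta/|beta|.\<close>
definition ntk_final :: "real^'m^'d \<Rightarrow> real^'d \<Rightarrow> real^'m^'m" where
  "ntk_final X \<beta> = norm \<beta> *\<^sub>R (transpose X **
      (outer (\<beta> /\<^sub>R norm \<beta>) (\<beta> /\<^sub>R norm \<beta>) + mat 1) ** X)"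

definition beta_law :: "('d::finite \<Rightarrow> real) measure" where
  "beta_law = PiM UNIV (\<lambda>_. density lborel (normal_density 0 (sqrt (1 / real CARD('d)))))"

definition expected_KA :: "real^'m^'d::finite \<Rightarrow> real^'d^'n \<Rightarrow> real^'n \<Rightarrow> real" where
  "expected_KA X W1 W2 =
     (\<integral>g. kernel_alignment (ntk_final X (\<chi> i. g i)) (ntk_init X W1 W2) \<partial>beta_law)"

definition sq_singular_values :: "real^'d^'n \<Rightarrow> real set" where
  "sq_singular_values W = {s. \<exists>v. v \<noteq> 0 \<and> (transpose W ** W) *v v = s *\<^sub>R v}"

end

theory Submission
  imports Defs
begin


lemma ND_prob: "s > 0 \<Longrightarrow> prob_space (density lborel (normal_density 0 s))"
  by (rule prob_space_normal_density)

lemma sets_ND[simp]: "sets (density lborel (normal_density 0 s)) = sets borel" by simp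

lemma ND_sym:
  assumes A: "A \<in> sets borel"
  shows "emeasure (density lborel (normal_density 0 s)) (uminus -` A) = emeasure (density lborel (normal_density 0 s)) A"
proof -
  have um: "(uminus::real\<Rightarrow>real) \<in> borel_measurable borel" by simp
  have m: "uminus -` A \<in> sets borel" using measurable_sets[OF um A] by simp
  have "emeasure (density lborel (normal_density 0 s)) (uminus -` A)
     = (\<integral>\<^sup>+ x. ennreal (normal_density 0 s x) * indicator (uminus -` A) x \<partial>lborel)"
    using m by (simp add: emeasure_density)
  also have "\<dots> = (\<integral>\<^sup>+ x. ennreal (normal_density 0 s (- x)) * indicator A (- x) \<partial>lborel)"
    by (intro nn_integral_cong) (simp add: normal_density_def indicator_def)
  also have "\<dots> = (\<integral>\<^sup>+ x. ennreal (normal_density 0 s x) * indicator A x \<partial>distr lborel borel uminus)"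
    using A by (subst nn_integral_distr) auto
  also have "\<dots> = emeasure (density lborel (normal_density 0 s)) A"
    using A by (simp add: lborel_distr_uminus emeasure_density)
  finally show ?thesis .
qed

lemma flip_inv:
  fixes i :: "'d::finite" and s :: real
  assumes s: "s > 0"
  defines "P \<equiv> PiM (UNIV::'d set) (\<lambda>_. density lborel (normal_density 0 s))"
  shows "distr P P (\<lambda>g. g(i := - g i)) = P"
proof -
  interpret product_prob_space "\<lambda>_::'d. density lborel (normal_density 0 s)"
    by (simp add: product_prob_space_def product_prob_space_axioms_def product_sigma_finite_def ND_prob[OF s] prob_space_imp_sigma_finite)
  have eqf: "(\<lambda>g. g(i := - g i)) = (\<lambda>g j. if j = i then - g j else g j)"
    by (auto simp: fun_eq_iff)
  have meas: "(\<lambda>g. g(i := - g i)) \<in> measurable P P"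
    unfolding P_def eqf
    by (rule measurable_PiM_single') (auto simp: space_PiM)
  have "distr P P (\<lambda>g. g(i := - g i)) = PiM (UNIV::'d set) (\<lambda>_. density lborel (normal_density 0 s))"
  proof (rule PiM_eqI)
    fix A assume A: "\<And>j. j \<in> (UNIV::'d set) \<Longrightarrow> A j \<in> sets (density lborel (normal_density 0 s))"
    have pre: "(\<lambda>g. g(i := - g i)) -` Pi\<^sub>E UNIV A \<inter> space P = Pi\<^sub>E UNIV (A(i := uminus -` A i))"
      unfolding P_def by (auto simp: space_PiM PiE_def Pi_def split: if_splits)
    have um: "(uminus::real\<Rightarrow>real) \<in> borel_measurable borel" by simp
    have Ai: "uminus -` A i \<in> sets borel" using measurable_sets[OF um, of "A i"] A[of i] by simp
    have "emeasure (distr P P (\<lambda>g. g(i := - g i))) (Pi\<^sub>E UNIV A)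
        = emeasure P (Pi\<^sub>E UNIV (A(i := uminus -` A i)))"
      using meas A by (subst emeasure_distr) (auto simp: P_def pre[unfolded P_def] intro!: sets_PiM_I_finite)
    also have "\<dots> = (\<Prod>j\<in>UNIV. emeasure (density lborel (normal_density 0 s)) ((A(i := uminus -` A i)) j))"
      unfolding P_def using A Ai by (subst emeasure_PiM) auto
    also have "\<dots> = (\<Prod>j\<in>UNIV. emeasure (density lborel (normal_density 0 s)) (A j))"
      using A by (intro prod.cong refl) (auto simp: ND_sym)
    finally show "emeasure (distr P P (\<lambda>g. g(i := - g i))) (Pi\<^sub>E UNIV A) = (\<Prod>j\<in>UNIV. emeasure (density lborel (normal_density 0 s)) (A j))" .
  qed (auto simp: P_def)
  then show ?thesis by (simp add: P_def)
qed

lemma perm_inv: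
  fixes \<tau> :: "'d::finite \<Rightarrow> 'd" and s :: real
  assumes s: "s > 0" and bij: "bij \<tau>"
  defines "P \<equiv> PiM (UNIV::'d set) (\<lambda>_. density lborel (normal_density 0 s))"
  shows "distr P P (\<lambda>g. g \<circ> \<tau>) = P"
proof -
  interpret product_prob_space "\<lambda>_::'d. density lborel (normal_density 0 s)"
    by (simp add: product_prob_space_def product_prob_space_axioms_def product_sigma_finite_def ND_prob[OF s] prob_space_imp_sigma_finite)
  have meas: "(\<lambda>g. g \<circ> \<tau>) \<in> measurable P P"
    unfolding P_def comp_def
    by (rule measurable_PiM_single') (auto simp: space_PiM)
  have "distr P P (\<lambda>g. g \<circ> \<tau>) = PiM (UNIV::'d set) (\<lambda>_. density lborel (normal_density 0 s))"
  proof (rule PiM_eqI)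
    fix A assume A: "\<And>j. j \<in> (UNIV::'d set) \<Longrightarrow> A j \<in> sets (density lborel (normal_density 0 s))"
    have pre: "(\<lambda>g. g \<circ> \<tau>) -` Pi\<^sub>E UNIV A \<inter> space P = Pi\<^sub>E UNIV (A \<circ> inv \<tau>)"
    proof -
      have "\<And>g. (\<forall>k. g (\<tau> k) \<in> A k) \<longleftrightarrow> (\<forall>m. g m \<in> A (inv \<tau> m))"
        using bij by (metis bij_inv_eq_iff)
      then show ?thesis
        unfolding P_def by (auto simp: space_PiM PiE_def Pi_def)
    qed
    have "emeasure (distr P P (\<lambda>g. g \<circ> \<tau>)) (Pi\<^sub>E UNIV A)
        = emeasure P (Pi\<^sub>E UNIV (A \<circ> inv \<tau>))"
      using meas A by (subst emeasure_distr) (auto simp: P_def pre[unfolded P_def] intro!: sets_PiM_I_finite)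
    also have "\<dots> = (\<Prod>j\<in>UNIV. emeasure (density lborel (normal_density 0 s)) ((A \<circ> inv \<tau>) j))"
      unfolding P_def using A by (subst emeasure_PiM) auto
    also have "\<dots> = (\<Prod>j\<in>UNIV. emeasure (density lborel (normal_density 0 s)) (A j))"
    proof -
      have "bij (inv \<tau>)" using bij by (simp add: bij_imp_bij_inv)
      then show ?thesis
        using prod.reindex_bij_betw[of "inv \<tau>" UNIV UNIV "\<lambda>j. emeasure (density lborel (normal_density 0 s)) (A j)"]
        by (simp add: comp_def)
    qed
    finally show "emeasure (distr P P (\<lambda>g. g \<circ> \<tau>)) (Pi\<^sub>E UNIV A) = (\<Prod>j\<in>UNIV. emeasure (density lborel (normal_density 0 s)) (A j))" .
  qed (auto simp: P_def)
  then show ?thesis by (simp add: P_def)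
qed

lemma AE_nonzero:
  fixes s :: real
  assumes s: "s > 0"
  shows "AE g in PiM (UNIV::'d::finite set) (\<lambda>_. density lborel (normal_density 0 s)). (\<Sum>k\<in>UNIV. (g k)\<^sup>2) \<noteq> 0"
proof -
  interpret product_prob_space "\<lambda>_::'d. density lborel (normal_density 0 s)"
    by (simp add: product_prob_space_def product_prob_space_axioms_def product_sigma_finite_def ND_prob[OF s] prob_space_imp_sigma_finite)
  have N0: "emeasure (density lborel (normal_density 0 s)) {0} = 0"
  proof -
    have "emeasure (density lborel (normal_density 0 s)) {0} = (\<integral>\<^sup>+ x. ennreal (normal_density 0 s x) * indicator {0} x \<partial>lborel)"
      by (rule emeasure_density) auto
    also have "\<dots> = (\<integral>\<^sup>+ (x::real). 0 \<partial>lborel)"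
    proof (rule nn_integral_cong_AE)
      show "AE x in lborel. ennreal (normal_density 0 s x) * indicator {0} x = 0"
        using AE_lborel_singleton[of "0::real"] by eventually_elim auto
    qed
    finally show ?thesis by simp
  qed
  have set: "{g \<in> space (PiM (UNIV::'d set) (\<lambda>_. density lborel (normal_density 0 s))). \<not> (\<Sum>k\<in>UNIV. (g k)\<^sup>2) \<noteq> 0}
      = Pi\<^sub>E UNIV (\<lambda>_. {0})"
    by (auto simp: space_PiM PiE_def Pi_def sum_nonneg_eq_0_iff extensional_def)
  have "emeasure (PiM (UNIV::'d set) (\<lambda>_. density lborel (normal_density 0 s))) (Pi\<^sub>E UNIV (\<lambda>_. {0})) = 0"
    by (subst emeasure_PiM) (auto simp: N0)
  moreover have "Pi\<^sub>E UNIV (\<lambda>_. {0}) \<in> sets (PiM (UNIV::'d set) (\<lambda>_. density lborel (normal_density 0 s)))"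
    by (rule sets_PiM_I_finite) auto
  ultimately have Z: "Pi\<^sub>E UNIV (\<lambda>_. {0}) \<in> null_sets (PiM (UNIV::'d set) (\<lambda>_. density lborel (normal_density 0 s)))"
    by (simp only: null_sets_def mem_Collect_eq)
  show ?thesis
    by (rule AE_I'[OF Z]) (simp only: set order_refl)
qed

definition hq :: "'d::finite \<Rightarrow> 'd \<Rightarrow> ('d \<Rightarrow> real) \<Rightarrow> real" where
  "hq i j g = g i * g j / (\<Sum>k\<in>UNIV. (g k)\<^sup>2)"

lemma hq_meas[measurable]: "hq i j \<in> borel_measurable (PiM UNIV (\<lambda>_. density lborel (normal_density 0 s)))"
  unfolding hq_def[abs_def] by measurable

lemma hq_bound: "\<bar>hq i j g\<bar> \<le> 1"
proof -
  let ?S = "\<Sum>k\<in>UNIV. (g k)\<^sup>2"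
  have "\<bar>g i * g j\<bar> \<le> ?S"
  proof (cases "i = j")
    case True
    have "(g i)\<^sup>2 \<le> ?S" by (rule member_le_sum) auto
    then show ?thesis using True by (simp add: abs_mult power2_eq_square)
  next
    case False
    have "\<bar>g i * g j\<bar> \<le> (g i)\<^sup>2 + (g j)\<^sup>2"
    proof -
      have "0 \<le> (\<bar>g i\<bar> - \<bar>g j\<bar>)\<^sup>2" by simp
      then have "2 * (\<bar>g i\<bar> * \<bar>g j\<bar>) \<le> \<bar>g i\<bar>\<^sup>2 + \<bar>g j\<bar>\<^sup>2" by (simp add: power2_diff)
      moreover have "0 \<le> \<bar>g i\<bar> * \<bar>g j\<bar>" by simp
      ultimately show ?thesis unfolding abs_mult power2_abs by linarith
    qed
    also have "\<dots> = (\<Sum>k\<in>{i,j}. (g k)\<^sup>2)" using False by simp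
    also have "\<dots> \<le> ?S" by (rule sum_mono2) auto
    finally show ?thesis .
  qed
  moreover have "?S \<ge> 0" by (rule sum_nonneg) simp
  ultimately show ?thesis
  proof (cases "?S = 0")
    case False
    with \<open>?S \<ge> 0\<close> have "?S > 0" by simp
    then show ?thesis using \<open>\<bar>g i * g j\<bar> \<le> ?S\<close> unfolding hq_def
      by (simp add: abs_divide pos_divide_le_eq)
  qed (simp add: hq_def)
qed

context
  fixes s :: real
  assumes s: "s > 0"
begin

interpretation PP: prob_space "PiM (UNIV::'d::finite set) (\<lambda>_. density lborel (normal_density 0 s))"
  by (intro prob_space_PiM ND_prob[OF s])

lemma hq_int: "integrable (PiM (UNIV::'d::finite set) (\<lambda>_. density lborel (normal_density 0 s))) (hq i j)"
  by (rule PP.integrable_const_bound[where B=1]) (auto simp: hq_bound)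

lemma E_off:
  fixes i j :: "'d::finite"
  assumes ij: "i \<noteq> j"
  shows "(\<integral>g. hq i j g \<partial>PiM (UNIV::'d set) (\<lambda>_. density lborel (normal_density 0 s))) = 0"
proof -
  let ?P = "PiM (UNIV::'d set) (\<lambda>_. density lborel (normal_density 0 s))"
  have eqf: "(\<lambda>g. g(i := - g i)) = (\<lambda>g j. if j = i then - g j else g j)"
    by (auto simp: fun_eq_iff)
  have meas: "(\<lambda>g. g(i := - g i)) \<in> measurable ?P ?P"
    unfolding eqf by (rule measurable_PiM_single') (auto simp: space_PiM)
  have "(\<integral>g. hq i j g \<partial>?P) = (\<integral>g. hq i j g \<partial>distr ?P ?P (\<lambda>g. g(i := - g i)))"
    by (simp add: flip_inv[OF s])
  also have "\<dots> = (\<integral>g. hq i j (g(i := - g i)) \<partial>?P)"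
    by (rule integral_distr[OF meas]) simp
  also have "\<dots> = (\<integral>g. - hq i j g \<partial>?P)"
  proof (rule Bochner_Integration.integral_cong[OF refl])
    fix g :: "'d \<Rightarrow> real"
    have "(\<Sum>k\<in>UNIV. ((g(i := - g i)) k)\<^sup>2) = (\<Sum>k\<in>UNIV. (g k)\<^sup>2)"
      by (intro sum.cong) auto
    then show "hq i j (g(i := - g i)) = - hq i j g"
      using ij unfolding hq_def by simp
  qed
  finally show ?thesis by simp
qed

lemma E_diag_eq:
  fixes i j :: "'d::finite"
  shows "(\<integral>g. hq i i g \<partial>PiM (UNIV::'d set) (\<lambda>_. density lborel (normal_density 0 s)))
       = (\<integral>g. hq j j g \<partial>PiM (UNIV::'d set) (\<lambda>_. density lborel (normal_density 0 s)))"
proof -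
  let ?P = "PiM (UNIV::'d set) (\<lambda>_. density lborel (normal_density 0 s))"
  define \<tau> where "\<tau> = (\<lambda>k. if k = i then j else if k = j then i else k)"
  have tt: "\<tau> \<circ> \<tau> = id" by (auto simp: \<tau>_def fun_eq_iff)
  have bij: "bij \<tau>" by (rule o_bij[OF tt tt])
  have meas: "(\<lambda>g. g \<circ> \<tau>) \<in> measurable ?P ?P"
    unfolding comp_def by (rule measurable_PiM_single') (auto simp: space_PiM)
  have "(\<integral>g. hq j j g \<partial>?P) = (\<integral>g. hq j j g \<partial>distr ?P ?P (\<lambda>g. g \<circ> \<tau>))"
    by (simp add: perm_inv[OF s bij])
  also have "\<dots> = (\<integral>g. hq j j (g \<circ> \<tau>) \<partial>?P)"
    by (rule integral_distr[OF meas]) simp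
  also have "\<dots> = (\<integral>g. hq i i g \<partial>?P)"
  proof (rule Bochner_Integration.integral_cong[OF refl])
    fix g :: "'d \<Rightarrow> real"
    have "(\<Sum>k\<in>UNIV. (g (\<tau> k))\<^sup>2) = (\<Sum>k\<in>UNIV. (g k)\<^sup>2)"
      using sum.reindex_bij_betw[of \<tau> UNIV UNIV "\<lambda>k. (g k)\<^sup>2"] bij by simp
    moreover have "\<tau> j = i" by (simp add: \<tau>_def)
    ultimately show "hq j j (g \<circ> \<tau>) = hq i i g"
      unfolding hq_def by simp
  qed
  finally show ?thesis by simp
qed

lemma E_diag:
  fixes i :: "'d::finite"
  shows "(\<integral>g. hq i i g \<partial>PiM (UNIV::'d set) (\<lambda>_. density lborel (normal_density 0 s))) = 1 / real CARD('d)"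
proof -
  let ?P = "PiM (UNIV::'d set) (\<lambda>_. density lborel (normal_density 0 s))"
  have "(\<Sum>j\<in>UNIV. (\<integral>g. hq j j g \<partial>?P)) = (\<integral>g. (\<Sum>j\<in>UNIV. hq j j g) \<partial>?P)"
    by (subst Bochner_Integration.integral_sum) (auto simp: hq_int)
  also have "\<dots> = (\<integral>g. 1 \<partial>?P)"
  proof (rule integral_cong_AE)
    show "AE g in ?P. (\<Sum>j\<in>UNIV. hq j j g) = 1"
      using AE_nonzero[OF s] 
    proof eventually_elim
      case (elim g)
      then show ?case unfolding hq_def
        by (simp add: sum_divide_distrib[symmetric] power2_eq_square)
    qed
  qed auto
  also have "\<dots> = 1" by (simp add: PP.prob_space)
  finally have "(\<Sum>j\<in>UNIV. (\<integral>g. hq j j g \<partial>?P)) = 1" .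
  moreover have "(\<Sum>j\<in>UNIV. (\<integral>g. hq j j g \<partial>?P)) = real CARD('d) * (\<integral>g. hq i i g \<partial>?P)"
  proof -
    have "(\<Sum>j\<in>UNIV. (\<integral>g. hq j j g \<partial>?P)) = (\<Sum>j\<in>(UNIV::'d set). (\<integral>g. hq i i g \<partial>?P))"
      by (rule sum.cong[OF refl]) (rule E_diag_eq[symmetric])
    then show ?thesis by simp
  qed
  ultimately show ?thesis by (simp add: field_simps)
qed

end



lemma scaleR_mmul: "((c::real) *\<^sub>R P) ** Q = c *\<^sub>R ((P::real^'b^'a) ** (Q::real^'c^'b))"
  by (simp add: matrix_matrix_mult_def sum_distrib_left vec_eq_iff mult.assoc)

lemma mmul_scaleR: "(P::real^'b^'a) ** ((c::real) *\<^sub>R Q) = c *\<^sub>R (P ** (Q::real^'c^'b))"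
  by (simp add: matrix_matrix_mult_def sum_distrib_left vec_eq_iff mult_ac)

lemma mmul_add_right: "((A::real^'b^'a) + B) ** (C::real^'c^'b) = A ** C + B ** C"
  by (simp add: matrix_matrix_mult_def vec_eq_iff sum.distrib distrib_right)

lemma trace_scaleR: "trace ((c::real) *\<^sub>R (P::real^'a^'a)) = c * trace P"
  by (simp add: trace_def sum_distrib_left)

lemma frob_sq: "(frob_norm (K::real^'b^'a))\<^sup>2 = (\<Sum>i\<in>UNIV. \<Sum>j\<in>UNIV. (K$i$j)\<^sup>2)"
  unfolding frob_norm_def by (auto intro!: real_sqrt_pow2 sum_nonneg)

lemma frob_nonneg: "frob_norm K \<ge> 0"
  unfolding frob_norm_def by (auto intro!: sum_nonneg)

lemma frob_scaleR: "frob_norm ((c::real) *\<^sub>R (K::real^'b^'a)) = \<bar>c\<bar> * frob_norm K"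
proof -
  have "(\<Sum>i\<in>UNIV. \<Sum>j\<in>UNIV. ((c *\<^sub>R K)$i$j)\<^sup>2) = c\<^sup>2 * (\<Sum>i\<in>UNIV. \<Sum>j\<in>UNIV. (K$i$j)\<^sup>2)"
    by (simp add: sum_distrib_left power_mult_distrib)
  then show ?thesis unfolding frob_norm_def by (simp add: real_sqrt_mult)
qed

lemma frob_trace: "(frob_norm (K::real^'b^'a))\<^sup>2 = trace (transpose K ** K)"
proof -
  have "trace (transpose K ** K) = (\<Sum>j\<in>UNIV. \<Sum>i\<in>UNIV. (K$i$j)\<^sup>2)"
    by (simp add: trace_def matrix_matrix_mult_def transpose_def power2_eq_square)
  also have "\<dots> = (\<Sum>i\<in>UNIV. \<Sum>j\<in>UNIV. (K$i$j)\<^sup>2)"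
    by (rule sum.swap)
  finally show ?thesis by (simp add: frob_sq)
qed

lemma trace_sandwich:
  fixes X :: "real^'m^'d" and A B :: "real^'d^'d"
  assumes XX: "X ** transpose X = mat 1"
  shows "trace ((transpose X ** A ** X) ** (transpose X ** B ** X)) = trace (A ** B)"
proof -
  have "(transpose X ** A ** X) ** (transpose X ** B ** X) = transpose X ** A ** (X ** transpose X) ** B ** X"
    by (simp add: matrix_mul_assoc)
  also have "\<dots> = transpose X ** (A ** B ** X)" by (simp add: XX matrix_mul_assoc)
  finally have "trace ((transpose X ** A ** X) ** (transpose X ** B ** X)) = trace ((A ** B ** X) ** transpose X)"
    using trace_mul_sym by metis
  also have "\<dots> = trace (A ** B)" by (simp add: XX flip: matrix_mul_assoc)
  finally show ?thesis .
qed

lemma frob_sandwich: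
  fixes X :: "real^'m^'d" and A :: "real^'d^'d"
  assumes XX: "X ** transpose X = mat 1"
  shows "frob_norm (transpose X ** A ** X) = frob_norm A"
proof -
  have "(frob_norm (transpose X ** A ** X))\<^sup>2 = trace (transpose (transpose X ** A ** X) ** (transpose X ** A ** X))"
    by (rule frob_trace)
  also have "transpose (transpose X ** A ** X) = transpose X ** transpose A ** X"
    by (simp add: matrix_transpose_mul matrix_mul_assoc)
  also have "trace ((transpose X ** transpose A ** X) ** (transpose X ** A ** X)) = trace (transpose A ** A)"
    by (rule trace_sandwich[OF XX])
  also have "\<dots> = (frob_norm A)\<^sup>2" by (simp add: frob_trace)
  finally show ?thesis using frob_nonneg by (metis power2_eq_iff_nonneg)
qed

lemma norm_sq_vec: "(norm (x::real^'d))\<^sup>2 = (\<Sum>i\<in>UNIV. (x$i)\<^sup>2)"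
  by (simp only: power2_norm_eq_inner inner_vec_def) (simp add: power2_eq_square)

lemma trace_AB:
  fixes b :: "real^'d" and M :: "real^'d^'d" and c :: real
  assumes b: "(\<Sum>i\<in>UNIV. (b$i)\<^sup>2) = 1"
  shows "trace ((outer b b + mat 1) ** (M + c *\<^sub>R mat 1))
       = (\<Sum>i\<in>UNIV. \<Sum>j\<in>UNIV. M$i$j * b$i * b$j) + c + trace M + c * real CARD('d)"
proof -
  have e1: "trace (outer b b ** M) = (\<Sum>i\<in>UNIV. \<Sum>j\<in>UNIV. M$i$j * b$i * b$j)"
  proof -
    have "trace (outer b b ** M) = (\<Sum>i\<in>UNIV. \<Sum>k\<in>UNIV. M$k$i * b$k * b$i)"
      unfolding trace_def matrix_matrix_mult_def outer_def
      by (intro sum.cong refl) (simp add: algebra_simps)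
    also have "\<dots> = (\<Sum>k\<in>UNIV. \<Sum>i\<in>UNIV. M$k$i * b$k * b$i)" by (rule sum.swap)
    finally show ?thesis .
  qed
  have e2: "trace (outer b b ** (c *\<^sub>R mat 1)) = c"
  proof -
    have "trace (outer b b ** (c *\<^sub>R mat 1)) = c * (\<Sum>i\<in>UNIV. (b$i)\<^sup>2)"
      by (simp add: mmul_scaleR trace_scaleR trace_def outer_def power2_eq_square sum_distrib_left)
    then show ?thesis using b by simp
  qed
  have e3: "trace (c *\<^sub>R (mat 1::real^'d^'d)) = c * real CARD('d)"
    by (simp add: trace_def mat_def)
  show ?thesis
    by (simp add: mmul_add_right matrix_add_ldistrib trace_add e1 e2 e3)
qed

lemma frob_A:
  fixes b :: "real^'d"
  assumes b: "(\<Sum>i\<in>UNIV. (b$i)\<^sup>2) = 1"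
  shows "frob_norm (outer b b + mat 1) = sqrt (real CARD('d) + 3)"
proof -
  have "(\<Sum>i\<in>UNIV. \<Sum>j\<in>UNIV. ((outer b b + mat 1)$i$j)\<^sup>2)
      = (\<Sum>i\<in>UNIV. \<Sum>j\<in>UNIV. (b$i)\<^sup>2 * (b$j)\<^sup>2 + (if i = j then 2 * (b$i)\<^sup>2 + 1 else 0))"
    by (intro sum.cong refl) (simp add: outer_def mat_def power2_eq_square algebra_simps)
  also have "\<dots> = (\<Sum>i\<in>UNIV. (b$i)\<^sup>2) * (\<Sum>j\<in>UNIV. (b$j)\<^sup>2) + (2 * (\<Sum>i\<in>UNIV. (b$i)\<^sup>2) + real CARD('d))"
  proof -
    have r: "(\<Sum>j\<in>UNIV. (b$i)\<^sup>2 * (b$j)\<^sup>2 + (if i = j then 2 * (b$i)\<^sup>2 + 1 else 0))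
        = (b$i)\<^sup>2 * (\<Sum>j\<in>UNIV. (b$j)\<^sup>2) + (2 * (b$i)\<^sup>2 + 1)" for i
      by (simp add: sum.distrib sum_distrib_left)
    show ?thesis
      by (simp only: r sum.distrib sum_distrib_right[symmetric] sum_distrib_left[symmetric]) (simp add: sum.distrib sum_distrib_left)
  qed
  also have "\<dots> = real CARD('d) + 3" using b by simp
  finally show ?thesis unfolding frob_norm_def by simp
qed

lemma KA_formula:
  fixes X :: "real^'m^'d" and W :: "real^'d^'n" and W2 :: "real^'n" and \<beta> :: "real^'d"
  assumes XX: "X ** transpose X = mat 1" and fW: "frob_norm W = \<sigma>" and nW2: "norm W2 = \<sigma>"
    and \<beta>: "\<beta> \<noteq> 0"
  shows "kernel_alignment (ntk_final X \<beta>) (ntk_init X W W2)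
    = ((\<Sum>i\<in>UNIV. \<Sum>j\<in>UNIV. (transpose W ** W)$i$j * \<beta>$i * \<beta>$j) / (norm \<beta>)\<^sup>2 + \<sigma>\<^sup>2 * (real CARD('d) + 2))
      / (sqrt (real CARD('d) + 3) * frob_norm (transpose W ** W + \<sigma>\<^sup>2 *\<^sub>R mat 1))"
proof -
  define b where "b = \<beta> /\<^sub>R norm \<beta>"
  define M where "M = transpose W ** W"
  define A where "A = outer b b + mat 1"
  define B where "B = M + \<sigma>\<^sup>2 *\<^sub>R (mat 1 :: real^'d^'d)"
  have nbpos: "norm \<beta> > 0" using \<beta> by simp
  have nb1: "norm b = 1" unfolding b_def using \<beta> by simp
  have nb: "(\<Sum>i\<in>UNIV. (b$i)\<^sup>2) = 1" using norm_sq_vec[of b] nb1 by simp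
  have F: "ntk_final X \<beta> = norm \<beta> *\<^sub>R (transpose X ** A ** X)"
    unfolding ntk_final_def A_def b_def ..
  have I: "ntk_init X W W2 = transpose X ** B ** X"
    unfolding ntk_init_def B_def M_def nW2 ..
  have "kernel_alignment (ntk_final X \<beta>) (ntk_init X W W2) = trace (A ** B) / (frob_norm A * frob_norm B)"
    unfolding kernel_alignment_def F I scaleR_mmul trace_scaleR frob_scaleR trace_sandwich[OF XX] frob_sandwich[OF XX]
    using nbpos by simp
  also have "trace (A ** B) = (\<Sum>i\<in>UNIV. \<Sum>j\<in>UNIV. M$i$j * b$i * b$j) + \<sigma>\<^sup>2 + trace M + \<sigma>\<^sup>2 * real CARD('d)"
    unfolding A_def B_def by (rule trace_AB[OF nb])
  also have "trace M = \<sigma>\<^sup>2" unfolding M_def using frob_trace[of W] fW by simp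
  also have "(\<Sum>i\<in>UNIV. \<Sum>j\<in>UNIV. M$i$j * b$i * b$j) = (\<Sum>i\<in>UNIV. \<Sum>j\<in>UNIV. M$i$j * \<beta>$i * \<beta>$j) / (norm \<beta>)\<^sup>2"
    unfolding b_def by (simp add: sum_divide_distrib power2_eq_square) (intro sum.cong refl, simp add: field_simps)
  also have "frob_norm A = sqrt (real CARD('d) + 3)" unfolding A_def by (rule frob_A[OF nb])
  finally show ?thesis unfolding M_def B_def by (simp add: algebra_simps)
qed



lemma KA_zero: "kernel_alignment (ntk_final X 0) K0 = 0"
  by (simp add: kernel_alignment_def ntk_final_def trace_def matrix_matrix_mult_def)

lemma expected_KA_formula:
  fixes X :: "real^'m^'d::finite" and W :: "real^'d^'n" and W2 :: "real^'n"
  assumes XX: "X ** transpose X = mat 1" and fW: "frob_norm W = \<sigma>" and nW2: "norm W2 = \<sigma>"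
  shows "expected_KA X W W2 = (\<sigma>\<^sup>2 / real CARD('d) + \<sigma>\<^sup>2 * (real CARD('d) + 2))
      / (sqrt (real CARD('d) + 3) * frob_norm (transpose W ** W + \<sigma>\<^sup>2 *\<^sub>R mat 1))"
proof -
  define s :: real where "s = sqrt (1 / real CARD('d))"
  have s: "s > 0" unfolding s_def by simp
  let ?P = "PiM (UNIV::'d set) (\<lambda>_. density lborel (normal_density 0 s))"
  have BL: "(beta_law :: ('d \<Rightarrow> real) measure) = ?P" unfolding beta_law_def s_def ..
  define M where "M = transpose W ** W"
  define D where "D = sqrt (real CARD('d) + 3) * frob_norm (transpose W ** W + \<sigma>\<^sup>2 *\<^sub>R mat 1)"
  define C where "C = \<sigma>\<^sup>2 * (real CARD('d) + 2)"
  define S where "S g = (\<Sum>k\<in>UNIV. (g k)\<^sup>2)" for g :: "'d \<Rightarrow> real"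
  define F where "F g = ((\<Sum>i\<in>UNIV. \<Sum>j\<in>UNIV. M$i$j * hq i j g) + C) / D" for g :: "'d \<Rightarrow> real"
  have pw: "kernel_alignment (ntk_final X (\<chi> i. g i)) (ntk_init X W W2) = (if S g = 0 then 0 else F g)" for g
  proof (cases "S g = 0")
    case True
    then have "(\<chi> i. g i) = 0" unfolding S_def by (simp add: sum_nonneg_eq_0_iff vec_eq_iff)
    then show ?thesis using True by (simp add: KA_zero)
  next
    case False
    have n2: "(norm (\<chi> i. g i))\<^sup>2 = S g" unfolding norm_sq_vec S_def by simp
    then have nz: "(\<chi> i. g i) \<noteq> 0" using False by auto
    show ?thesis
      unfolding KA_formula[OF XX fW nW2 nz] using False
      by (simp add: n2 F_def C_def D_def M_def hq_def S_def sum_divide_distrib mult.assoc)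
  qed
  have "expected_KA X W W2 = (\<integral>g. (if S g = 0 then 0 else F g) \<partial>?P)"
    unfolding expected_KA_def BL pw ..
  also have "\<dots> = (\<integral>g. F g \<partial>?P)"
  proof (rule integral_cong_AE)
    show "(\<lambda>g. if S g = 0 then 0 else F g) \<in> borel_measurable ?P"
      unfolding S_def F_def by measurable
    show "F \<in> borel_measurable ?P"
      unfolding F_def by measurable
    show "AE g in ?P. (if S g = 0 then 0 else F g) = F g"
      using AE_nonzero[OF s] unfolding S_def by eventually_elim simp
  qed
  also have "\<dots> = ((\<Sum>i\<in>UNIV. \<Sum>j\<in>UNIV. M$i$j * (\<integral>g. hq i j g \<partial>?P)) + C) / D"
  proof -
    interpret PP: prob_space ?P by (intro prob_space_PiM ND_prob[OF s])
    have int: "integrable ?P (hq i j)" for i j by (rule hq_int[OF s])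
    have "(\<integral>g. F g \<partial>?P) = (\<integral>g. (\<Sum>i\<in>UNIV. \<Sum>j\<in>UNIV. M$i$j * hq i j g) + C \<partial>?P) / D"
      unfolding F_def by simp
    also have "(\<integral>g. (\<Sum>i\<in>UNIV. \<Sum>j\<in>UNIV. M$i$j * hq i j g) + C \<partial>?P)
        = (\<integral>g. (\<Sum>i\<in>UNIV. \<Sum>j\<in>UNIV. M$i$j * hq i j g) \<partial>?P) + C"
      using int by (subst Bochner_Integration.integral_add) (auto simp: PP.prob_space)
    also have "(\<integral>g. (\<Sum>i\<in>UNIV. \<Sum>j\<in>UNIV. M$i$j * hq i j g) \<partial>?P)
        = (\<Sum>i\<in>UNIV. \<Sum>j\<in>UNIV. M$i$j * (\<integral>g. hq i j g \<partial>?P))"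
      using int by (simp add: Bochner_Integration.integral_sum)
    finally show ?thesis .
  qed
  also have "(\<Sum>i\<in>UNIV. \<Sum>j\<in>UNIV. M$i$j * (\<integral>g. hq i j g \<partial>?P)) = \<sigma>\<^sup>2 / real CARD('d)"
  proof -
    have "(\<Sum>i\<in>UNIV. \<Sum>j\<in>UNIV. M$i$j * (\<integral>g. hq i j g \<partial>?P))
        = (\<Sum>i\<in>UNIV. \<Sum>j\<in>UNIV. if i = j then M$i$i / real CARD('d) else 0)"
      by (intro sum.cong refl) (auto simp: E_off[OF s] E_diag[OF s])
    also have "\<dots> = trace M / real CARD('d)"
      by (simp add: trace_def sum_divide_distrib)
    also have "trace M = \<sigma>\<^sup>2" unfolding M_def using frob_trace[of W] fW by simp
    finally show ?thesis .
  qed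
  finally show ?thesis unfolding C_def D_def by simp
qed



lemma mv_add: "(A::real^'n^'m) *v (x + y) = A *v x + A *v y"
  using linear_add[OF matrix_vector_mul_linear] by blast

lemma mv_scale: "(A::real^'n^'m) *v (c *\<^sub>R x) = c *\<^sub>R (A *v x)"
  using linear_scale[OF matrix_vector_mul_linear] by blast

lemma mv_diff_mat: "((B::real^'n^'m) - C) *v x = B *v x - C *v x"
  by (simp add: vec_eq_iff matrix_vector_mult_def sum_subtractf algebra_simps)

lemma mv_scaleR_mat: "((c::real) *\<^sub>R (B::real^'n^'m)) *v x = c *\<^sub>R (B *v x)"
  by (simp add: vec_eq_iff matrix_vector_mult_def sum_distrib_left algebra_simps)

lemma sym_swap:
  fixes A :: "real^'n^'n"
  assumes "transpose A = A"
  shows "y \<bullet> (A *v x) = x \<bullet> (A *v y)"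
proof -
  have "y \<bullet> (A *v x) = (y v* A) \<bullet> x" by (simp add: dot_lmul_matrix)
  also have "y v* A = transpose A *v y" by simp
  also have "\<dots> = A *v y" using assms by simp
  finally show ?thesis by (simp add: inner_commute)
qed

lemma psd_zero:
  fixes A :: "real^'n^'n"
  assumes sym: "transpose A = A" and psd: "\<And>x. 0 \<le> x \<bullet> (A *v x)" and v: "v \<bullet> (A *v v) = 0"
  shows "A *v v = 0"
proof -
  define w where "w = A *v v"
  define a where "a = w \<bullet> w"
  define b where "b = w \<bullet> (A *v w)"
  have b0: "b \<ge> 0" unfolding b_def by (rule psd)
  have exp: "(v + t *\<^sub>R w) \<bullet> (A *v (v + t *\<^sub>R w)) = 2 * t * a + t\<^sup>2 * b" for t
  proof -
    have "(v + t *\<^sub>R w) \<bullet> (A *v (v + t *\<^sub>R w))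
        = v \<bullet> (A *v v) + t * (v \<bullet> (A *v w)) + t * (w \<bullet> (A *v v)) + t * t * (w \<bullet> (A *v w))"
      by (simp add: mv_add mv_scale inner_add_left inner_add_right algebra_simps)
    also have "v \<bullet> (A *v w) = w \<bullet> (A *v v)" by (rule sym_swap[OF sym])
    finally show ?thesis using v by (simp add: a_def b_def w_def power2_eq_square algebra_simps)
  qed
  define t where "t = - a / (1 + b)"
  have "0 \<le> 2 * t * a + t\<^sup>2 * b" using psd[of "v + t *\<^sub>R w"] exp[of t] by simp
  also have "2 * t * a + t\<^sup>2 * b = a\<^sup>2 * (- 2 - b) / (1 + b)\<^sup>2"
  proof -
    have nz: "1 + b \<noteq> 0" using b0 by simp
    have ht: "t * (1 + b) = - a" unfolding t_def using nz by simp
    have "(2 * t * a + t\<^sup>2 * b) * (1 + b)\<^sup>2 = 2 * a * (t * (1 + b)) * (1 + b) + (t * (1 + b))\<^sup>2 * b"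
      by (simp add: power2_eq_square algebra_simps)
    also have "\<dots> = a\<^sup>2 * (- 2 - b)"
      unfolding ht by (simp add: power2_eq_square algebra_simps)
    finally have "(2 * t * a + t\<^sup>2 * b) * (1 + b)\<^sup>2 = a\<^sup>2 * (- 2 - b)" .
    moreover have "(1 + b)\<^sup>2 \<noteq> 0" using nz by simp
    ultimately show ?thesis by (intro eq_divide_imp)
  qed
  finally have "0 \<le> a\<^sup>2 * (- 2 - b) / (1 + b)\<^sup>2" .
  moreover have "(1 + b)\<^sup>2 > 0" using b0 by simp
  ultimately have "0 \<le> a\<^sup>2 * (- 2 - b)" by (simp add: zero_le_divide_iff)
  then have "a\<^sup>2 \<le> 0" using b0 by (auto simp: zero_le_mult_iff)
  then have "a = 0" by simp
  then show ?thesis unfolding a_def w_def by simp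
qed

lemma sym_max_eig:
  fixes A :: "real^'n^'n"
  assumes sym: "transpose A = A"
  shows "\<exists>v l. v \<noteq> 0 \<and> A *v v = l *\<^sub>R v \<and> (\<forall>x. x \<bullet> (A *v x) \<le> l * (x \<bullet> x))"
proof -
  have ne: "sphere (0::real^'n) 1 \<noteq> {}"
    using vector_choose_size[of 1] by (auto simp: sphere_def)
  have cont: "continuous_on (sphere 0 1) (\<lambda>x::real^'n. x \<bullet> (A *v x))"
    by (intro continuous_intros linear_continuous_on matrix_vector_mul_bounded_linear)
  obtain v where v: "v \<in> sphere 0 1" and vmax: "\<And>y. y \<in> sphere 0 1 \<Longrightarrow> y \<bullet> (A *v y) \<le> v \<bullet> (A *v v)"
    using continuous_attains_sup[OF compact_sphere ne cont] by blast
  define l where "l = v \<bullet> (A *v v)"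
  have nv: "norm v = 1" using v by simp
  have bound: "x \<bullet> (A *v x) \<le> l * (x \<bullet> x)" for x
  proof (cases "x = 0")
    case True then show ?thesis by simp
  next
    case False
    define y where "y = x /\<^sub>R norm x"
    have "y \<in> sphere 0 1" using False unfolding y_def by simp
    then have "y \<bullet> (A *v y) \<le> l" unfolding l_def by (rule vmax)
    moreover have "y \<bullet> (A *v y) = (x \<bullet> (A *v x)) / (norm x)\<^sup>2"
      unfolding y_def by (simp add: mv_scale power2_eq_square field_simps)
    moreover have "(norm x)\<^sup>2 > 0" using False by simp
    ultimately have "x \<bullet> (A *v x) \<le> l * (norm x)\<^sup>2" by (simp add: divide_le_eq)
    then show ?thesis by (simp add: power2_norm_eq_inner)
  qed
  define N where "N = l *\<^sub>R mat 1 - A"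
  have Nsym: "transpose N = N" unfolding N_def using sym
    by (simp add: transpose_def vec_eq_iff mat_def)
  have Nx: "N *v x = l *\<^sub>R x - A *v x" for x
    unfolding N_def by (simp add: mv_diff_mat mv_scaleR_mat)
  have "N *v v = 0"
  proof (rule psd_zero[OF Nsym])
    show "0 \<le> x \<bullet> (N *v x)" for x using bound[of x] by (simp add: Nx inner_diff_right)
    show "v \<bullet> (N *v v) = 0" using nv by (simp add: Nx inner_diff_right l_def power2_norm_eq_inner[symmetric])
  qed
  then have "A *v v = l *\<^sub>R v" by (simp add: Nx)
  moreover have "v \<noteq> 0" using nv by auto
  ultimately show ?thesis using bound by blast
qed



lemma div_cmp:
  fixes a b K :: real
  assumes a: "0 < a" and b: "0 < b" and K: "0 < K"
  shows "(K / a \<le> K / b) = (b \<le> a)"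
proof -
  have ab: "0 < a * b" using a b by simp
  have "(K / a \<le> K / b) = (K / a * (a * b) \<le> K / b * (a * b))"
    by (rule mult_le_cancel_right_pos[OF ab, symmetric])
  also have "K / a * (a * b) = K * b" using a by simp
  also have "K / b * (a * b) = K * a" using b by simp
  also have "(K * b \<le> K * a) = (b \<le> a)" using K by simp
  finally show ?thesis .
qed

lemma mv_neg_mat: "(- (A::real^'n^'m)) *v x = - (A *v x)"
  by (simp add: vec_eq_iff matrix_vector_mult_def sum_negf)

lemma sym_quad_zero:
  fixes N :: "real^'n^'n"
  assumes sym: "transpose N = N" and q: "\<And>x. x \<bullet> (N *v x) = 0"
  shows "N = 0"
proof -
  have "N *v x = 0 *v x" for x
    using psd_zero[OF sym, of x] q by simp
  then show ?thesis by (simp add: matrix_eq)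
qed

lemma eig_iff:
  fixes W :: "real^'d^'n" and c :: real
  shows "(\<forall>s\<in>sq_singular_values W. s = c) \<longleftrightarrow> transpose W ** W = c *\<^sub>R mat 1"
proof
  assume "transpose W ** W = c *\<^sub>R mat 1"
  then show "\<forall>s\<in>sq_singular_values W. s = c"
    unfolding sq_singular_values_def
    by (auto simp: mv_scaleR_mat dest: scaleR_cancel_right[THEN iffD1, rotated])
next
  assume H: "\<forall>s\<in>sq_singular_values W. s = c"
  define M where "M = transpose W ** W"
  have sym: "transpose M = M" unfolding M_def by (simp add: matrix_transpose_mul)
  have symn: "transpose (- M) = - M" using sym by (simp add: transpose_def vec_eq_iff)
  obtain v l where v: "v \<noteq> 0" "M *v v = l *\<^sub>R v" and lb: "\<And>x. x \<bullet> (M *v x) \<le> l * (x \<bullet> x)"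
    using sym_max_eig[OF sym] by blast
  have "l = c" using H v unfolding sq_singular_values_def M_def by auto
  obtain v2 l2 where v2: "v2 \<noteq> 0" "(- M) *v v2 = l2 *\<^sub>R v2" and lb2: "\<And>x. x \<bullet> ((- M) *v x) \<le> l2 * (x \<bullet> x)"
    using sym_max_eig[OF symn] by blast
  have "- (M *v v2) = l2 *\<^sub>R v2" using v2(2) by (simp add: mv_neg_mat)
  then have "M *v v2 = (- l2) *\<^sub>R v2" by (metis minus_minus scaleR_minus_left)
  then have "- l2 \<in> sq_singular_values W" unfolding sq_singular_values_def M_def using v2(1) by blast
  then have "- l2 = c" using H by blast
  define N where "N = M - c *\<^sub>R mat 1"
  have Nsym: "transpose N = N" unfolding N_def using sym by (simp add: transpose_def vec_eq_iff mat_def)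
  have "x \<bullet> (N *v x) = 0" for x
  proof -
    have "x \<bullet> (M *v x) \<le> c * (x \<bullet> x)" using lb[of x] \<open>l = c\<close> by simp
    moreover have "x \<bullet> (M *v x) \<ge> c * (x \<bullet> x)"
    proof -
      have h1: "- (x \<bullet> (M *v x)) \<le> l2 * (x \<bullet> x)" using lb2[of x] by (simp add: mv_neg_mat)
      have h2: "c * (x \<bullet> x) = - (l2 * (x \<bullet> x))" using \<open>- l2 = c\<close> by (metis mult_minus_left)
      from h1 h2 show ?thesis by linarith
    qed
    ultimately show ?thesis unfolding N_def by (simp add: mv_diff_mat mv_scaleR_mat inner_diff_right)
  qed
  then have "N = 0" by (rule sym_quad_zero[OF Nsym])
  then show "transpose W ** W = c *\<^sub>R mat 1" unfolding N_def M_def by simp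
qed

lemma frob_shift:
  fixes M :: "real^'d^'d" and p q :: real
  shows "(\<Sum>i\<in>UNIV. \<Sum>j\<in>UNIV. ((M + p *\<^sub>R mat 1)$i$j)\<^sup>2)
       = (\<Sum>i\<in>UNIV. \<Sum>j\<in>UNIV. (M$i$j - (if i = j then q else 0))\<^sup>2)
         + real CARD('d) * (p\<^sup>2 - q\<^sup>2) + 2 * (p + q) * trace M"
proof -
  have e: "((M + p *\<^sub>R mat 1)$i$j)\<^sup>2 = (M$i$j - (if i = j then q else 0))\<^sup>2
      + (if i = j then (p\<^sup>2 - q\<^sup>2) + 2 * (p + q) * M$i$i else 0)" for i j
    by (cases "i = j") (simp_all add: mat_def power2_eq_square algebra_simps)
  have "(\<Sum>i\<in>UNIV. \<Sum>j\<in>UNIV. ((M + p *\<^sub>R mat 1)$i$j)\<^sup>2)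
      = (\<Sum>i\<in>UNIV. \<Sum>j\<in>UNIV. (M$i$j - (if i = j then q else 0))\<^sup>2)
        + (\<Sum>i\<in>UNIV. (p\<^sup>2 - q\<^sup>2) + 2 * (p + q) * M$i$i)"
    by (simp only: e sum.distrib) (simp add: if_distrib sum.distrib cong: if_cong)
  also have "(\<Sum>i\<in>UNIV. (p\<^sup>2 - q\<^sup>2) + 2 * (p + q) * M$i$i) = real CARD('d) * (p\<^sup>2 - q\<^sup>2) + 2 * (p + q) * trace M"
  proof -
    have "(\<Sum>i\<in>UNIV. (p\<^sup>2 - q\<^sup>2) + 2 * (p + q) * M$i$i) = (\<Sum>i\<in>(UNIV::'d set). (p\<^sup>2 - q\<^sup>2)) + (\<Sum>i\<in>UNIV. 2 * (p + q) * M$i$i)"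
      by (rule sum.distrib)
    also have "(\<Sum>i\<in>UNIV. 2 * (p + q) * M$i$i) = 2 * (p + q) * trace M"
      unfolding trace_def by (rule sum_distrib_left[symmetric])
    finally show ?thesis by simp
  qed
  finally show ?thesis by simp
qed

theorem theorem1:
  fixes X :: "real^'m^'d" and W2 :: "real^'n" and \<sigma> :: real
  assumes "CARD('m) \<ge> CARD('d)" and "CARD('n) \<ge> CARD('d)"
    and "X ** transpose X = mat 1"
    and "\<sigma> > 0" and "norm W2 = \<sigma>"
  shows "(\<exists>W1 :: real^'d^'n. frob_norm W1 = \<sigma> \<and>
            (\<forall>s\<in>sq_singular_values W1. s = \<sigma>\<^sup>2 / real CARD('d)))
       \<and> (\<forall>W1 :: real^'d^'n. frob_norm W1 = \<sigma> \<longrightarrow>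
            ((\<forall>W :: real^'d^'n. frob_norm W = \<sigma> \<longrightarrow>
                 expected_KA X W W2 \<le> expected_KA X W1 W2)
             \<longleftrightarrow> (\<forall>s\<in>sq_singular_values W1. s = \<sigma>\<^sup>2 / real CARD('d))))"
proof -
  define d where "d = real CARD('d)"
  define c where "c = \<sigma>\<^sup>2 / d"
  have dpos: "d \<ge> 1" unfolding d_def by simp
  have c0: "c \<ge> 0" unfolding c_def using dpos by simp
  have cle: "c \<le> \<sigma>\<^sup>2" unfolding c_def using dpos mult_left_mono[of 1 d "\<sigma>\<^sup>2"] by (simp add: divide_le_eq)
  have s0: "\<sigma>\<^sup>2 > 0" using assms(4) by simp
  define G where "G W = frob_norm (transpose W ** W + \<sigma>\<^sup>2 *\<^sub>R mat 1)" for W :: "real^'d^'n"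
  define dev where "dev W = (\<Sum>i\<in>UNIV. \<Sum>j\<in>UNIV. ((transpose W ** W)$i$j - (if i = j then c else 0))\<^sup>2)" for W :: "real^'d^'n"
  define K where "K = \<sigma>\<^sup>2 / d + \<sigma>\<^sup>2 * (d + 2)"
  define R where "R = d * ((\<sigma>\<^sup>2)\<^sup>2 - c\<^sup>2) + 2 * (\<sigma>\<^sup>2 + c) * \<sigma>\<^sup>2"
  have Kpos: "K > 0" unfolding K_def using s0 dpos by (simp add: add_pos_pos)
  have Rpos: "R > 0"
  proof -
    have "c\<^sup>2 \<le> (\<sigma>\<^sup>2)\<^sup>2" using c0 cle by (rule power_mono[rotated])
    then have "d * ((\<sigma>\<^sup>2)\<^sup>2 - c\<^sup>2) \<ge> 0" using dpos by simp
    moreover have "2 * (\<sigma>\<^sup>2 + c) * \<sigma>\<^sup>2 > 0" using s0 c0 by (intro mult_pos_pos) (auto intro: add_pos_nonneg)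
    ultimately show ?thesis unfolding R_def by linarith
  qed
  have devnn: "dev W \<ge> 0" for W unfolding dev_def by (intro sum_nonneg) simp
  have trW: "trace (transpose W ** W) = \<sigma>\<^sup>2" if "frob_norm W = \<sigma>" for W :: "real^'d^'n"
    using frob_trace[of W] that by simp
  have G2: "(G W)\<^sup>2 = dev W + R" if "frob_norm W = \<sigma>" for W
    unfolding G_def frob_sq frob_shift[where q=c] dev_def R_def trW[OF that] d_def by simp
  have Gpos: "G W > 0" if "frob_norm W = \<sigma>" for W
  proof -
    have "(G W)\<^sup>2 > 0" using G2[OF that] devnn[of W] Rpos by simp
    moreover have "G W \<ge> 0" unfolding G_def by (rule frob_nonneg)
    ultimately show ?thesis by (cases "G W = 0") auto
  qed
  have E: "expected_KA X W W2 = K / (sqrt (d + 3) * G W)" if "frob_norm W = \<sigma>" for W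
    unfolding expected_KA_formula[OF assms(3) that assms(5)] K_def G_def d_def ..
  have cmp: "expected_KA X W W2 \<le> expected_KA X W1 W2 \<longleftrightarrow> dev W1 \<le> dev W"
    if W: "frob_norm W = \<sigma>" and W1: "frob_norm W1 = \<sigma>" for W W1
  proof -
    have sq: "sqrt (d + 3) > 0" using dpos by simp
    have a: "sqrt (d + 3) * G W > 0" using sq Gpos[OF W] by simp
    have b: "sqrt (d + 3) * G W1 > 0" using sq Gpos[OF W1] by simp
    have "K / (sqrt (d + 3) * G W) \<le> K / (sqrt (d + 3) * G W1) \<longleftrightarrow> sqrt (d + 3) * G W1 \<le> sqrt (d + 3) * G W"
      by (rule div_cmp[OF a b Kpos])
    also have "\<dots> \<longleftrightarrow> G W1 \<le> G W" using sq by simp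
    also have "\<dots> \<longleftrightarrow> (G W1)\<^sup>2 \<le> (G W)\<^sup>2"
      using abs_le_square_iff[of "G W1" "G W"] Gpos[OF W] Gpos[OF W1] by simp
    also have "\<dots> \<longleftrightarrow> dev W1 \<le> dev W" using G2[OF W] G2[OF W1] by simp
    finally show ?thesis using E[OF W] E[OF W1] by simp
  qed
  have dev0: "dev W = 0 \<longleftrightarrow> transpose W ** W = c *\<^sub>R mat 1" for W
  proof -
    have "dev W = 0 \<longleftrightarrow> (\<forall>i j. (transpose W ** W)$i$j - (if i = j then c else 0) = 0)"
      unfolding dev_def by (simp add: sum_nonneg_eq_0_iff sum_nonneg)
    also have "\<dots> \<longleftrightarrow> transpose W ** W = c *\<^sub>R mat 1"
      by (simp add: vec_eq_iff mat_def)
    finally show ?thesis .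
  qed
  obtain e :: "'d \<Rightarrow> 'n" where e: "inj e"
    using card_le_inj[of "UNIV::'d set" "UNIV::'n set"] assms(2) by auto
  define W0 :: "real^'d^'n" where "W0 = (\<chi> r j. if r = e j then sqrt c else 0)"
  have M0: "transpose W0 ** W0 = c *\<^sub>R mat 1"
  proof -
    have "(\<Sum>r\<in>UNIV. (if r = e i then sqrt c else 0) * (if r = e j then sqrt c else 0)) = (if i = j then c else 0)" for i j
    proof (cases "i = j")
      case True
      then show ?thesis using c0 by (simp add: if_distrib cong: if_cong)
    next
      case False
      then have "e i \<noteq> e j" using e by (auto simp: inj_eq)
      then have "(\<Sum>r\<in>UNIV. (if r = e i then sqrt c else 0) * (if r = e j then sqrt c else 0)) = 0"
        by (intro sum.neutral) auto
      then show ?thesis using False by simp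
    qed
    then show ?thesis
      by (simp add: vec_eq_iff matrix_matrix_mult_def transpose_def W0_def mat_def)
  qed
  have fW0: "frob_norm W0 = \<sigma>"
  proof -
    have "(frob_norm W0)\<^sup>2 = trace (c *\<^sub>R (mat 1 :: real^'d^'d))" unfolding frob_trace M0 ..
    also have "\<dots> = \<sigma>\<^sup>2" by (simp add: trace_def mat_def c_def d_def)
    finally show ?thesis using frob_nonneg[of W0] assms(4) by simp
  qed
  have dW0: "dev W0 = 0" using dev0 M0 by simp
  have part1: "\<exists>W1 :: real^'d^'n. frob_norm W1 = \<sigma> \<and> (\<forall>s\<in>sq_singular_values W1. s = \<sigma>\<^sup>2 / real CARD('d))"
    using fW0 M0 eig_iff[of W0 c] unfolding c_def d_def by blast
  have part2: "((\<forall>W :: real^'d^'n. frob_norm W = \<sigma> \<longrightarrow> expected_KA X W W2 \<le> expected_KA X W1 W2)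
             \<longleftrightarrow> (\<forall>s\<in>sq_singular_values W1. s = \<sigma>\<^sup>2 / real CARD('d)))"
    if W1: "frob_norm W1 = \<sigma>" for W1 :: "real^'d^'n"
  proof -
    have "(\<forall>W :: real^'d^'n. frob_norm W = \<sigma> \<longrightarrow> expected_KA X W W2 \<le> expected_KA X W1 W2)
        \<longleftrightarrow> dev W1 = 0"
    proof
      assume H: "\<forall>W :: real^'d^'n. frob_norm W = \<sigma> \<longrightarrow> expected_KA X W W2 \<le> expected_KA X W1 W2"
      then have "dev W1 \<le> dev W0" using cmp[OF fW0 W1] fW0 by blast
      then show "dev W1 = 0" using dW0 devnn[of W1] by simp
    next
      assume "dev W1 = 0"
      then show "\<forall>W :: real^'d^'n. frob_norm W = \<sigma> \<longrightarrow> expected_KA X W W2 \<le> expected_KA X W1 W2"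
        using cmp[OF _ W1] devnn by simp
    qed
    also have "\<dots> \<longleftrightarrow> (\<forall>s\<in>sq_singular_values W1. s = \<sigma>\<^sup>2 / real CARD('d))"
      using dev0[of W1] eig_iff[of W1 c] unfolding c_def d_def by simp
    finally show ?thesis .
  qed
  show ?thesis using part1 part2 by blast
qed

end
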